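(* Let $m\le n$ and let $\bm W\in\mathbb{R}^{m\times n}$ be a (deterministic) matrix with $\bm W\bm W^T=\bm I_m$ and $\bm\xi_m^T\bm W\bm\xi_n=1$. Let $\bm x\in\mathbb{R}^n$ be a random vector with $\mathbb{E}[\bm x]=\mu\bm 1_n$ and $\operatorname{Cov}[\bm x]=\sigma^2\bm I_n$, where $\mu\in\mathbb{R}$ and $\sigma>0$. Then \[ \mathbb{E}[\bm W\bm x]=\mu\sqrt{\tfrac nm}\,\bm 1_m,\qquad \operatorname{Cov}[\bm W\bm x]=\sigma^2\bm I_m. \]
   Context: $\bm 1_k$ denotes the all-ones vector in $\mathbb{R}^k$ and $\bm\xi_k=\frac{1}{\sqrt k}\bm 1_k$. *)

theory Defs
  imports "HOL-Probability.Probability"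
begin

definition ones_vec :: "real ^ 'k" where
  "ones_vec = (\<chi> i. 1)"

definition xi_vec :: "real ^ 'k" where
  "xi_vec = (\<chi> i. 1 / sqrt (real CARD('k)))"

definition mean_vec :: "'a measure \<Rightarrow> ('a \<Rightarrow> real ^ 'k) \<Rightarrow> real ^ 'k" where
  "mean_vec M X = (\<chi> i. integral\<^sup>L M (\<lambda>\<omega>. X \<omega> $ i))"

definition cov_mat :: "'a measure \<Rightarrow> ('a \<Rightarrow> real ^ 'k) \<Rightarrow> real ^ 'k ^ 'k" where
  "cov_mat M X = (\<chi> i j. integral\<^sup>L M
      (\<lambda>\<omega>. (X \<omega> $ i - mean_vec M X $ i) * (X \<omega> $ j - mean_vec M X $ j)))"

end

theory Submission
  imports Defs
begin

lemma dot_mv: "(W *v (v::real^'n)) \<bullet> (y::real^'m) = v \<bullet> (transpose W *v y)"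
  by (metis dot_lmul_matrix vector_transpose_matrix inner_commute)

lemma contraction:
  fixes W :: "real ^ 'n ^ 'm"
  assumes "W ** transpose W = mat 1"
  shows "(W *v v) \<bullet> (W *v v) \<le> v \<bullet> v"
proof -
  define u where "u = W *v v"
  define P where "P = transpose W *v u"
  have 1: "u \<bullet> u = v \<bullet> P" unfolding P_def u_def by (rule dot_mv)
  have "P \<bullet> P = u \<bullet> (W *v P)"
    unfolding P_def by (metis dot_mv inner_commute transpose_transpose)
  also have "W *v P = u" unfolding P_def
    by (simp add: matrix_vector_mul_assoc assms del: transpose_matrix_vector)
  finally have 2: "P \<bullet> P = u \<bullet> u" .
  have "0 \<le> (v - P) \<bullet> (v - P)" by simp
  also have "\<dots> = v \<bullet> v - 2 * (v \<bullet> P) + P \<bullet> P"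
    by (simp add: inner_diff_left inner_diff_right inner_commute)
  finally show ?thesis using 1 2 u_def by simp
qed

lemma ones_dot: "(ones_vec :: real^'k) \<bullet> ones_vec = real CARD('k)"
  by (simp add: ones_vec_def inner_vec_def)

lemma xi_ones: "(xi_vec :: real^'k) = (1 / sqrt (real CARD('k))) *\<^sub>R ones_vec"
  by (simp add: xi_vec_def ones_vec_def vec_eq_iff)

lemma Wones:
  fixes W :: "real ^ 'n ^ 'm"
  assumes "W ** transpose W = mat 1"
    and "(xi_vec :: real ^ 'm) \<bullet> (W *v (xi_vec :: real ^ 'n)) = 1"
  shows "W *v ones_vec = sqrt (real CARD('n) / real CARD('m)) *\<^sub>R ones_vec"
proof -
  define a where "a = W *v (ones_vec :: real^'n)"
  define c where "c = sqrt (real CARD('n) / real CARD('m))"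
  define m where "m = real CARD('m)"
  define n where "n = real CARD('n)"
  have mp: "m > 0" "n > 0" unfolding m_def n_def by auto
  have e: "(xi_vec :: real ^ 'm) \<bullet> (W *v (xi_vec :: real ^ 'n)) = ((ones_vec :: real^'m) \<bullet> a) / (sqrt m * sqrt n)"
    unfolding xi_ones a_def m_def n_def
    by (simp add: matrix_vector_mult_scaleR inner_scaleR_left inner_scaleR_right)
  have oa: "(ones_vec :: real^'m) \<bullet> a = sqrt n * sqrt m"
    using e assms(2) mp by (simp add: field_simps)
  have aa: "a \<bullet> a \<le> n" using contraction[OF assms(1)] ones_dot unfolding a_def n_def by metis
  have c1: "c * (sqrt n * sqrt m) = n" unfolding c_def m_def[symmetric] n_def[symmetric]
    using mp by (simp add: real_sqrt_divide field_simps)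
  have c2: "c * c * m = n" unfolding c_def m_def[symmetric] n_def[symmetric]
    using mp by simp
  have "(a - c *\<^sub>R ones_vec) \<bullet> (a - c *\<^sub>R ones_vec) = a \<bullet> a - 2 * c * (ones_vec \<bullet> a) + c * c * (ones_vec \<bullet> (ones_vec :: real^'m))"
    by (simp add: inner_diff_left inner_diff_right inner_commute algebra_simps)
  also have "\<dots> = a \<bullet> a - n" using oa c1 c2 ones_dot[where 'k='m] unfolding m_def by (simp add: algebra_simps)
  finally have "(a - c *\<^sub>R ones_vec) \<bullet> (a - c *\<^sub>R ones_vec) \<le> 0" using aa by simp
  hence "a - c *\<^sub>R ones_vec = 0" by (metis inner_gt_zero_iff not_le right_minus_eq)
  thus ?thesis unfolding a_def c_def by simp
qed


lemma mean_lin: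
  fixes W :: "real ^ 'n ^ 'm" and X :: "'a \<Rightarrow> real ^ 'n"
  assumes "\<And>k. integrable M (\<lambda>\<omega>. X \<omega> $ k)"
  shows "mean_vec M (\<lambda>\<omega>. W *v X \<omega>) = W *v mean_vec M X"
  unfolding mean_vec_def matrix_vector_mult_def
  using assms by (simp add: vec_eq_iff)

theorem proposition3:
  fixes M :: "'a measure"
    and W :: "real ^ 'n ^ 'm"
    and X :: "'a \<Rightarrow> real ^ 'n"
    and \<mu> \<sigma> :: real
  assumes "prob_space M"
    and "CARD('m) \<le> CARD('n)"
    and "W ** transpose W = mat 1"
    and "(xi_vec :: real ^ 'm) \<bullet> (W *v (xi_vec :: real ^ 'n)) = 1"
    and "X \<in> borel_measurable M"
    and "\<And>i. integrable M (\<lambda>\<omega>. (X \<omega> $ i)\<^sup>2)"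
    and "mean_vec M X = \<mu> *\<^sub>R ones_vec"
    and "cov_mat M X = \<sigma>\<^sup>2 *\<^sub>R mat 1"
    and "\<sigma> > 0"
  shows "mean_vec M (\<lambda>\<omega>. W *v X \<omega>) = (\<mu> * sqrt (real CARD('n) / real CARD('m))) *\<^sub>R ones_vec \<and>
         cov_mat M (\<lambda>\<omega>. W *v X \<omega>) = \<sigma>\<^sup>2 *\<^sub>R mat 1"
proof -
  interpret prob_space M by fact
  have meas: "(\<lambda>\<omega>. X \<omega> $ k) \<in> borel_measurable M" for k
    using measurable_compose[OF assms(5) borel_measurable_nth] by simp
  have intX: "integrable M (\<lambda>\<omega>. X \<omega> $ k)" for k
    by (rule square_integrable_imp_integrable[OF meas assms(6)])
  have mean: "mean_vec M (\<lambda>\<omega>. W *v X \<omega>) = W *v mean_vec M X"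
    by (rule mean_lin[OF intX])
  show ?thesis
  proof
    show "mean_vec M (\<lambda>\<omega>. W *v X \<omega>) = (\<mu> * sqrt (real CARD('n) / real CARD('m))) *\<^sub>R ones_vec"
      unfolding mean assms(7) using Wones[OF assms(3,4)]
      by (simp add: matrix_vector_mult_scaleR)
  next
    define c where "c = mean_vec M X"
    define Y where "Y k \<omega> = X \<omega> $ k - c $ k" for k \<omega>
    have intY2: "integrable M (\<lambda>\<omega>. (Y k \<omega>)\<^sup>2)" for k
    proof -
      have "(\<lambda>\<omega>. (Y k \<omega>)\<^sup>2) = (\<lambda>\<omega>. (X \<omega> $ k)\<^sup>2 - 2 * c $ k * X \<omega> $ k + (c $ k)\<^sup>2)"
        unfolding Y_def by (simp add: power2_eq_square algebra_simps)
      thus ?thesis using assms(6) intX by simp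
    qed
    have measY: "Y k \<in> borel_measurable M" for k
      unfolding Y_def using meas by measurable
    have intYY: "integrable M (\<lambda>\<omega>. Y k \<omega> * Y l \<omega>)" for k l
    proof (rule Bochner_Integration.integrable_bound[OF Bochner_Integration.integrable_add[OF intY2[of k] intY2[of l]]])
      show "(\<lambda>\<omega>. Y k \<omega> * Y l \<omega>) \<in> borel_measurable M" using measY by measurable
      show "AE x in M. norm (Y k x * Y l x) \<le> norm ((Y k x)\<^sup>2 + (Y l x)\<^sup>2)"
      proof (rule AE_I2)
        fix x
        have h: "2 * \<bar>Y k x\<bar> * \<bar>Y l x\<bar> \<le> \<bar>Y k x\<bar>\<^sup>2 + \<bar>Y l x\<bar>\<^sup>2"
          by (rule sum_squares_bound)
        have "\<bar>Y k x * Y l x\<bar> \<le> (Y k x)\<^sup>2 + (Y l x)\<^sup>2"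
        proof -
          have e1: "\<bar>Y k x * Y l x\<bar> = \<bar>Y k x\<bar> * \<bar>Y l x\<bar>" by (rule abs_mult)
          have e2: "0 \<le> \<bar>Y k x\<bar> * \<bar>Y l x\<bar>" by simp
          have e3: "\<bar>Y k x\<bar>\<^sup>2 = (Y k x)\<^sup>2" "\<bar>Y l x\<bar>\<^sup>2 = (Y l x)\<^sup>2" by simp_all
          show ?thesis using h e1 e2 e3 by linarith
        qed
        thus "norm (Y k x * Y l x) \<le> norm ((Y k x)\<^sup>2 + (Y l x)\<^sup>2)" by simp
      qed
    qed
    have covY: "integral\<^sup>L M (\<lambda>\<omega>. Y k \<omega> * Y l \<omega>) = (if k = l then \<sigma>\<^sup>2 else 0)" for k l
    proof -
      have "cov_mat M X $ k $ l = (\<sigma>\<^sup>2 *\<^sub>R mat 1 :: real^'n^'n) $ k $ l" using assms(8) by simp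
      thus ?thesis unfolding cov_mat_def Y_def c_def by (simp add: mat_def)
    qed
    have diff: "(W *v X \<omega>) $ i - mean_vec M (\<lambda>\<omega>. W *v X \<omega>) $ i = (\<Sum>k\<in>UNIV. W $ i $ k * Y k \<omega>)" for i \<omega>
    proof -
      have "mean_vec M (\<lambda>\<omega>. W *v X \<omega>) $ i = (W *v c) $ i" using mean c_def by simp
      thus ?thesis unfolding Y_def
        by (simp add: matrix_vector_mult_def sum_subtractf right_diff_distrib)
    qed
    show "cov_mat M (\<lambda>\<omega>. W *v X \<omega>) = \<sigma>\<^sup>2 *\<^sub>R mat 1"
    proof -
      have "integral\<^sup>L M (\<lambda>\<omega>. (\<Sum>k\<in>UNIV. W $ i $ k * Y k \<omega>) * (\<Sum>l\<in>UNIV. W $ j $ l * Y l \<omega>))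
            = (\<sigma>\<^sup>2 *\<^sub>R (mat 1 :: real^'m^'m)) $ i $ j" for i j
      proof -
        have "integral\<^sup>L M (\<lambda>\<omega>. (\<Sum>k\<in>UNIV. W $ i $ k * Y k \<omega>) * (\<Sum>l\<in>UNIV. W $ j $ l * Y l \<omega>))
            = integral\<^sup>L M (\<lambda>\<omega>. \<Sum>k\<in>UNIV. \<Sum>l\<in>UNIV. (W $ i $ k * W $ j $ l) * (Y k \<omega> * Y l \<omega>))"
          unfolding sum_product by (simp add: mult_ac)
        also have "\<dots> = (\<Sum>k\<in>UNIV. \<Sum>l\<in>UNIV. (W $ i $ k * W $ j $ l) * integral\<^sup>L M (\<lambda>\<omega>. Y k \<omega> * Y l \<omega>))"
          using intYY by (simp add: Bochner_Integration.integral_sum)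
        also have "\<dots> = \<sigma>\<^sup>2 * (\<Sum>k\<in>UNIV. W $ i $ k * W $ j $ k)"
        proof -
          have d: "(\<Sum>l\<in>UNIV. (W $ i $ k * W $ j $ l) * (if k = l then \<sigma>\<^sup>2 else 0))
                    = \<sigma>\<^sup>2 * (W $ i $ k * W $ j $ k)" for k
          proof -
            have "(\<Sum>l\<in>UNIV. (W $ i $ k * W $ j $ l) * (if k = l then \<sigma>\<^sup>2 else 0))
                = (\<Sum>l\<in>UNIV. if k = l then \<sigma>\<^sup>2 * (W $ i $ k * W $ j $ l) else 0)"
              by (rule sum.cong) auto
            thus ?thesis by simp
          qed
          show ?thesis unfolding covY d sum_distrib_left ..
        qed
        also have "\<dots> = \<sigma>\<^sup>2 * (W ** transpose W) $ i $ j"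
          by (simp add: matrix_matrix_mult_def transpose_def)
        also have "\<dots> = (\<sigma>\<^sup>2 *\<^sub>R (mat 1 :: real^'m^'m)) $ i $ j"
          using assms(3) by simp
        finally show ?thesis .
      qed
      thus ?thesis unfolding cov_mat_def diff by (simp add: vec_eq_iff)
    qed
  qed
qed

end
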